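(* Let $\emptyset\neq\mathcal T\subset\binom{[n]}{3}$ be an intersecting family. Then either $\mathcal T$ is isomorphic to $\mathcal L$ or to $\mathcal T_0$, or there exist $T\in\mathcal T$ and $S\subset T$ with $|S|=2$ and $|\mathcal T(\overline S)|\leq 1$.
   Context: A family is intersecting if any two members intersect. For $S\subset[n]$, $\mathcal T(\overline S)=\{T\in\mathcal T: T\cap S=\emptyset\}$. $\mathcal L$ is the Fano plane: $\{1,2,3\},\{1,4,5\},\{1,6,7\},\{2,4,6\},\{2,5,7\},\{3,5,6\},\{3,4,7\}$. $\mathcal T_0\subset\binom{[6]}{3}$ is $\{\{1,2,3\},\{1,2,4\},\{3,4,5\},\{3,4,6\},\{1,5,6\},\{2,5,6\},\{1,3,5\},\{2,4,5\},\{1,4,6\},\{2,3,6\}\}$. Isomorphic means equal up to an injective relabeling of vertices. *)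

theory Defs
  imports Main
begin

definition intersecting :: "'a set set \<Rightarrow> bool" where
  "intersecting F \<longleftrightarrow> (\<forall>A\<in>F. \<forall>B\<in>F. A \<inter> B \<noteq> {})"

definition avoid :: "'a set set \<Rightarrow> 'a set \<Rightarrow> 'a set set" where
  "avoid F S = {T\<in>F. T \<inter> S = {}}"

definition fam_iso :: "'a set set \<Rightarrow> 'b set set \<Rightarrow> bool" where
  "fam_iso A B \<longleftrightarrow> (\<exists>f. inj_on f (\<Union>A) \<and> (\<lambda>X. f ` X) ` A = B)"

definition Fano :: "nat set set" where
  "Fano = {{1,2,3},{1,4,5},{1,6,7},{2,4,6},{2,5,7},{3,5,6},{3,4,7}}"

definition T0 :: "nat set set" where
  "T0 = {{1,2,3},{1,2,4},{3,4,5},{3,4,6},{1,5,6},{2,5,6},{1,3,5},{2,4,5},{1,4,6},{2,3,6}}"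

end

theory Submission
  imports Defs
begin
lemma card3_eq: assumes "card E = 3" "a\<in>E" "b\<in>E" "c\<in>E" "a\<noteq>b" "a\<noteq>c" "b\<noteq>c"
  shows "E = {a,b,c}"
proof -
  have "finite E" using assms(1) by (metis card.infinite zero_neq_numeral)
  moreover have "{a,b,c} \<subseteq> E" using assms by auto
  moreover have "card {a,b,c} = card E" using assms by auto
  ultimately show ?thesis by (metis card_subset_eq)
qed
lemma card3_four: assumes "card E = 3" "a\<in>E" "b\<in>E" "c\<in>E" "d\<in>E" "a\<noteq>b" "a\<noteq>c" "b\<noteq>c" "a\<noteq>d" "b\<noteq>d" "c\<noteq>d"
  shows False
proof -
  have "finite E" using assms(1) by (metis card.infinite zero_neq_numeral)
  moreover have "{a,b,c,d} \<subseteq> E" using assms by auto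
  ultimately have "card {a,b,c,d} \<le> card E" by (metis card_mono)
  then show False using assms by auto
qed

lemma third: assumes "card E = 3" "c\<in>E" "d\<in>E" "c\<noteq>d"
  obtains x where "x\<in>E" "x\<noteq>c" "x\<noteq>d"
proof -
  have "\<not> E \<subseteq> {c,d}"
  proof
    assume "E \<subseteq> {c,d}"
    then have "card E \<le> card {c,d}" by (simp add: card_mono)
    then show False using assms by simp
  qed
  then show ?thesis using that by blast
qed

lemma split3: assumes "card E = 3" "a\<in>E"
  obtains p q where "E = {a,p,q}" "a\<noteq>p" "a\<noteq>q" "p\<noteq>q"
proof -
  obtain e1 e2 e3 where e: "E = {e1,e2,e3}" "e1\<noteq>e2" "e1\<noteq>e3" "e2\<noteq>e3"
    using assms(1) by (auto simp: card_3_iff)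
  show ?thesis
  proof (cases "a = e1")
    case True then show ?thesis using that e by auto
  next
    case False
    show ?thesis
    proof (cases "a = e2")
      case True
      then have "E = {a,e1,e3}" using e by blast
      then show ?thesis using that[of e1 e3] e True by blast
    next
      case False
      then have "a = e3" using `a \<noteq> e1` assms(2) e by auto
      then have "E = {a,e1,e2}" using e by blast
      then show ?thesis using that[of e1 e2] e `a = e3` by blast
    qed
  qed
qed

definition condC :: "'a set set \<Rightarrow> bool" where
  "condC F \<longleftrightarrow> (\<forall>T\<in>F. \<forall>S. S \<subseteq> T \<and> card S = 2 \<longrightarrow> 2 \<le> card (avoid F S))"

lemma two_avoid: assumes "condC F" "T\<in>F" "u\<in>T" "v\<in>T" "u\<noteq>v"
  obtains E1 E2 where "E1\<in>F" "E2\<in>F" "E1\<noteq>E2" "u\<notin>E1" "v\<notin>E1" "u\<notin>E2" "v\<notin>E2"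
proof -
  have "{u,v} \<subseteq> T \<and> card {u,v} = 2" using assms by auto
  then have c: "2 \<le> card (avoid F {u,v})" using assms(1,2) unfolding condC_def by blast
  then have fin: "finite (avoid F {u,v})" using card.infinite by fastforce
  have "\<not> (\<forall>x\<in>avoid F {u,v}. \<forall>y\<in>avoid F {u,v}. x = y)"
    using c card_le_Suc0_iff_eq[OF fin] by auto
  then show ?thesis using that unfolding avoid_def by auto
qed

lemma pick3: assumes "card G = 3" "p\<in>G" "q\<in>G \<or> r\<in>G" "q\<in>G \<or> s\<in>G" "r\<in>G \<or> s\<in>G"
  "distinct [p,q,r,s]"
  shows "G = {p,q,r} \<or> G = {p,q,s} \<or> G = {p,r,s}"
  using assms card3_eq[OF assms(1), of p q r] card3_eq[OF assms(1), of p q s] card3_eq[OF assms(1), of p r s]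
    card3_four[OF assms(1), of p q r s] by auto

lemma pick22: assumes "card G = 3" "b\<in>G" "p1\<in>G \<or> q1\<in>G" "p2\<in>G \<or> q2\<in>G"
  "distinct [b,p1,q1,p2,q2]"
  shows "G = {b,p1,p2} \<or> G = {b,p1,q2} \<or> G = {b,q1,p2} \<or> G = {b,q1,q2}"
  using assms card3_eq[OF assms(1), of b p1 p2] card3_eq[OF assms(1), of b p1 q2]
   card3_eq[OF assms(1), of b q1 p2] card3_eq[OF assms(1), of b q1 q2]
   card3_four[OF assms(1), of b p1 q1 p2] card3_four[OF assms(1), of b p1 q1 q2]
   card3_four[OF assms(1), of b p1 p2 q2] card3_four[OF assms(1), of b q1 p2 q2] by auto

lemma pickF: assumes "card G = 3" "c\<in>G" "p1\<in>G \<or> q1\<in>G" "p2\<in>G \<or> q2\<in>G"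
  "p1\<in>G \<or> p2\<in>G" "q1\<in>G \<or> q2\<in>G"
  "distinct [c,p1,q1,p2,q2]"
  shows "G = {c,p1,q2} \<or> G = {c,q1,p2}"
  using assms card3_eq[OF assms(1), of c p1 q2] card3_eq[OF assms(1), of c q1 p2]
   card3_four[OF assms(1), of c p1 q1 p2] card3_four[OF assms(1), of c p1 q1 q2]
   card3_four[OF assms(1), of c p1 p2 q2] card3_four[OF assms(1), of c q1 p2 q2] by auto

lemma two_avoid': assumes "condC F" "T\<in>F" "u\<in>T" "v\<in>T" "u\<noteq>v"
  shows "\<exists>E1 E2. E1\<in>F \<and> E2\<in>F \<and> E1\<noteq>E2 \<and> u\<notin>E1 \<and> v\<notin>E1 \<and> u\<notin>E2 \<and> v\<notin>E2"
  using two_avoid[OF assms] by metis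

lemma ta12: "condC F \<Longrightarrow> {p,q,r}\<in>F \<Longrightarrow> p\<noteq>q \<Longrightarrow> \<exists>E1 E2. E1\<in>F \<and> E2\<in>F \<and> E1\<noteq>E2 \<and> p\<notin>E1 \<and> q\<notin>E1 \<and> p\<notin>E2 \<and> q\<notin>E2"
  by (rule two_avoid') auto
lemma ta23: "condC F \<Longrightarrow> {p,q,r}\<in>F \<Longrightarrow> q\<noteq>r \<Longrightarrow> \<exists>E1 E2. E1\<in>F \<and> E2\<in>F \<and> E1\<noteq>E2 \<and> q\<notin>E1 \<and> r\<notin>E1 \<and> q\<notin>E2 \<and> r\<notin>E2"
  by (rule two_avoid') auto
lemma ta13: "condC F \<Longrightarrow> {p,q,r}\<in>F \<Longrightarrow> p\<noteq>r \<Longrightarrow> \<exists>E1 E2. E1\<in>F \<and> E2\<in>F \<and> E1\<noteq>E2 \<and> p\<notin>E1 \<and> r\<notin>E1 \<and> p\<notin>E2 \<and> r\<notin>E2"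
  by (rule two_avoid') auto
lemma T0_max:
  assumes d: "distinct [v1,v2,v3,v4,v5,v6]" and E: "card E = 3"
  and m: "\<And>F. F \<in> {{v1,v2,v3},{v1,v2,v4},{v3,v4,v5},{v3,v4,v6},{v1,v5,v6},{v2,v5,v6},{v1,v3,v5},{v2,v4,v5},{v1,v4,v6},{v2,v3,v6}} \<Longrightarrow> E \<inter> F \<noteq> {}"
  shows "E \<in> {{v1,v2,v3},{v1,v2,v4},{v3,v4,v5},{v3,v4,v6},{v1,v5,v6},{v2,v5,v6},{v1,v3,v5},{v2,v4,v5},{v1,v4,v6},{v2,v3,v6}}"
proof -
  have m0: "v1 \<in> E \<or> v2 \<in> E \<or> v3 \<in> E" using m[of "{v1,v2,v3}"] by auto
  have m1: "v1 \<in> E \<or> v2 \<in> E \<or> v4 \<in> E" using m[of "{v1,v2,v4}"] by auto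
  have m2: "v3 \<in> E \<or> v4 \<in> E \<or> v5 \<in> E" using m[of "{v3,v4,v5}"] by auto
  have m3: "v3 \<in> E \<or> v4 \<in> E \<or> v6 \<in> E" using m[of "{v3,v4,v6}"] by auto
  have m4: "v1 \<in> E \<or> v5 \<in> E \<or> v6 \<in> E" using m[of "{v1,v5,v6}"] by auto
  have m5: "v2 \<in> E \<or> v5 \<in> E \<or> v6 \<in> E" using m[of "{v2,v5,v6}"] by auto
  have m6: "v1 \<in> E \<or> v3 \<in> E \<or> v5 \<in> E" using m[of "{v1,v3,v5}"] by auto
  have m7: "v2 \<in> E \<or> v4 \<in> E \<or> v5 \<in> E" using m[of "{v2,v4,v5}"] by auto
  have m8: "v1 \<in> E \<or> v4 \<in> E \<or> v6 \<in> E" using m[of "{v1,v4,v6}"] by auto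
  have m9: "v2 \<in> E \<or> v3 \<in> E \<or> v6 \<in> E" using m[of "{v2,v3,v6}"] by auto
  have q0: "\<not>(v1 \<in> E \<and> v2 \<in> E \<and> v3 \<in> E \<and> v4 \<in> E)" using d card3_four[OF E, of v1 v2 v3 v4] by auto
  have q1: "\<not>(v1 \<in> E \<and> v2 \<in> E \<and> v3 \<in> E \<and> v5 \<in> E)" using d card3_four[OF E, of v1 v2 v3 v5] by auto
  have q2: "\<not>(v1 \<in> E \<and> v2 \<in> E \<and> v3 \<in> E \<and> v6 \<in> E)" using d card3_four[OF E, of v1 v2 v3 v6] by auto
  have q3: "\<not>(v1 \<in> E \<and> v2 \<in> E \<and> v4 \<in> E \<and> v5 \<in> E)" using d card3_four[OF E, of v1 v2 v4 v5] by auto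
  have q4: "\<not>(v1 \<in> E \<and> v2 \<in> E \<and> v4 \<in> E \<and> v6 \<in> E)" using d card3_four[OF E, of v1 v2 v4 v6] by auto
  have q5: "\<not>(v1 \<in> E \<and> v2 \<in> E \<and> v5 \<in> E \<and> v6 \<in> E)" using d card3_four[OF E, of v1 v2 v5 v6] by auto
  have q6: "\<not>(v1 \<in> E \<and> v3 \<in> E \<and> v4 \<in> E \<and> v5 \<in> E)" using d card3_four[OF E, of v1 v3 v4 v5] by auto
  have q7: "\<not>(v1 \<in> E \<and> v3 \<in> E \<and> v4 \<in> E \<and> v6 \<in> E)" using d card3_four[OF E, of v1 v3 v4 v6] by auto
  have q8: "\<not>(v1 \<in> E \<and> v3 \<in> E \<and> v5 \<in> E \<and> v6 \<in> E)" using d card3_four[OF E, of v1 v3 v5 v6] by auto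
  have q9: "\<not>(v1 \<in> E \<and> v4 \<in> E \<and> v5 \<in> E \<and> v6 \<in> E)" using d card3_four[OF E, of v1 v4 v5 v6] by auto
  have q10: "\<not>(v2 \<in> E \<and> v3 \<in> E \<and> v4 \<in> E \<and> v5 \<in> E)" using d card3_four[OF E, of v2 v3 v4 v5] by auto
  have q11: "\<not>(v2 \<in> E \<and> v3 \<in> E \<and> v4 \<in> E \<and> v6 \<in> E)" using d card3_four[OF E, of v2 v3 v4 v6] by auto
  have q12: "\<not>(v2 \<in> E \<and> v3 \<in> E \<and> v5 \<in> E \<and> v6 \<in> E)" using d card3_four[OF E, of v2 v3 v5 v6] by auto
  have q13: "\<not>(v2 \<in> E \<and> v4 \<in> E \<and> v5 \<in> E \<and> v6 \<in> E)" using d card3_four[OF E, of v2 v4 v5 v6] by auto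
  have q14: "\<not>(v3 \<in> E \<and> v4 \<in> E \<and> v5 \<in> E \<and> v6 \<in> E)" using d card3_four[OF E, of v3 v4 v5 v6] by auto
  have "(v1 \<in> E \<and> v2 \<in> E \<and> v3 \<in> E) \<or> (v1 \<in> E \<and> v2 \<in> E \<and> v4 \<in> E) \<or> (v3 \<in> E \<and> v4 \<in> E \<and> v5 \<in> E) \<or> (v3 \<in> E \<and> v4 \<in> E \<and> v6 \<in> E) \<or> (v1 \<in> E \<and> v5 \<in> E \<and> v6 \<in> E) \<or> (v2 \<in> E \<and> v5 \<in> E \<and> v6 \<in> E) \<or> (v1 \<in> E \<and> v3 \<in> E \<and> v5 \<in> E) \<or> (v2 \<in> E \<and> v4 \<in> E \<and> v5 \<in> E) \<or> (v1 \<in> E \<and> v4 \<in> E \<and> v6 \<in> E) \<or> (v2 \<in> E \<and> v3 \<in> E \<and> v6 \<in> E)" using m0 m1 m2 m3 m4 m5 m6 m7 m8 m9 q0 q1 q2 q3 q4 q5 q6 q7 q8 q9 q10 q11 q12 q13 q14 by sat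
  then show ?thesis
  proof (elim disjE)
    assume h: "v1 \<in> E \<and> v2 \<in> E \<and> v3 \<in> E"
    have "E = {v1,v2,v3}" using h d card3_eq[OF E, of v1 v2 v3] by auto
    then show ?thesis by simp
  next
    assume h: "v1 \<in> E \<and> v2 \<in> E \<and> v4 \<in> E"
    have "E = {v1,v2,v4}" using h d card3_eq[OF E, of v1 v2 v4] by auto
    then show ?thesis by simp
  next
    assume h: "v3 \<in> E \<and> v4 \<in> E \<and> v5 \<in> E"
    have "E = {v3,v4,v5}" using h d card3_eq[OF E, of v3 v4 v5] by auto
    then show ?thesis by simp
  next
    assume h: "v3 \<in> E \<and> v4 \<in> E \<and> v6 \<in> E"
    have "E = {v3,v4,v6}" using h d card3_eq[OF E, of v3 v4 v6] by auto
    then show ?thesis by simp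
  next
    assume h: "v1 \<in> E \<and> v5 \<in> E \<and> v6 \<in> E"
    have "E = {v1,v5,v6}" using h d card3_eq[OF E, of v1 v5 v6] by auto
    then show ?thesis by simp
  next
    assume h: "v2 \<in> E \<and> v5 \<in> E \<and> v6 \<in> E"
    have "E = {v2,v5,v6}" using h d card3_eq[OF E, of v2 v5 v6] by auto
    then show ?thesis by simp
  next
    assume h: "v1 \<in> E \<and> v3 \<in> E \<and> v5 \<in> E"
    have "E = {v1,v3,v5}" using h d card3_eq[OF E, of v1 v3 v5] by auto
    then show ?thesis by simp
  next
    assume h: "v2 \<in> E \<and> v4 \<in> E \<and> v5 \<in> E"
    have "E = {v2,v4,v5}" using h d card3_eq[OF E, of v2 v4 v5] by auto
    then show ?thesis by simp
  next
    assume h: "v1 \<in> E \<and> v4 \<in> E \<and> v6 \<in> E"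
    have "E = {v1,v4,v6}" using h d card3_eq[OF E, of v1 v4 v6] by auto
    then show ?thesis by simp
  next
    assume h: "v2 \<in> E \<and> v3 \<in> E \<and> v6 \<in> E"
    have "E = {v2,v3,v6}" using h d card3_eq[OF E, of v2 v3 v6] by auto
    then show ?thesis by simp
  qed
qed

lemma Fano_max:
  assumes d: "distinct [v1,v2,v3,v4,v5,v6,v7]" and E: "card E = 3"
  and m: "\<And>F. F \<in> {{v1,v2,v3},{v1,v4,v5},{v1,v6,v7},{v2,v4,v6},{v2,v5,v7},{v3,v5,v6},{v3,v4,v7}} \<Longrightarrow> E \<inter> F \<noteq> {}"
  shows "E \<in> {{v1,v2,v3},{v1,v4,v5},{v1,v6,v7},{v2,v4,v6},{v2,v5,v7},{v3,v5,v6},{v3,v4,v7}}"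
proof -
  have m0: "v1 \<in> E \<or> v2 \<in> E \<or> v3 \<in> E" using m[of "{v1,v2,v3}"] by auto
  have m1: "v1 \<in> E \<or> v4 \<in> E \<or> v5 \<in> E" using m[of "{v1,v4,v5}"] by auto
  have m2: "v1 \<in> E \<or> v6 \<in> E \<or> v7 \<in> E" using m[of "{v1,v6,v7}"] by auto
  have m3: "v2 \<in> E \<or> v4 \<in> E \<or> v6 \<in> E" using m[of "{v2,v4,v6}"] by auto
  have m4: "v2 \<in> E \<or> v5 \<in> E \<or> v7 \<in> E" using m[of "{v2,v5,v7}"] by auto
  have m5: "v3 \<in> E \<or> v5 \<in> E \<or> v6 \<in> E" using m[of "{v3,v5,v6}"] by auto
  have m6: "v3 \<in> E \<or> v4 \<in> E \<or> v7 \<in> E" using m[of "{v3,v4,v7}"] by auto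
  have q0: "\<not>(v1 \<in> E \<and> v2 \<in> E \<and> v3 \<in> E \<and> v4 \<in> E)" using d card3_four[OF E, of v1 v2 v3 v4] by auto
  have q1: "\<not>(v1 \<in> E \<and> v2 \<in> E \<and> v3 \<in> E \<and> v5 \<in> E)" using d card3_four[OF E, of v1 v2 v3 v5] by auto
  have q2: "\<not>(v1 \<in> E \<and> v2 \<in> E \<and> v3 \<in> E \<and> v6 \<in> E)" using d card3_four[OF E, of v1 v2 v3 v6] by auto
  have q3: "\<not>(v1 \<in> E \<and> v2 \<in> E \<and> v3 \<in> E \<and> v7 \<in> E)" using d card3_four[OF E, of v1 v2 v3 v7] by auto
  have q4: "\<not>(v1 \<in> E \<and> v2 \<in> E \<and> v4 \<in> E \<and> v5 \<in> E)" using d card3_four[OF E, of v1 v2 v4 v5] by auto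
  have q5: "\<not>(v1 \<in> E \<and> v2 \<in> E \<and> v4 \<in> E \<and> v6 \<in> E)" using d card3_four[OF E, of v1 v2 v4 v6] by auto
  have q6: "\<not>(v1 \<in> E \<and> v2 \<in> E \<and> v4 \<in> E \<and> v7 \<in> E)" using d card3_four[OF E, of v1 v2 v4 v7] by auto
  have q7: "\<not>(v1 \<in> E \<and> v2 \<in> E \<and> v5 \<in> E \<and> v6 \<in> E)" using d card3_four[OF E, of v1 v2 v5 v6] by auto
  have q8: "\<not>(v1 \<in> E \<and> v2 \<in> E \<and> v5 \<in> E \<and> v7 \<in> E)" using d card3_four[OF E, of v1 v2 v5 v7] by auto
  have q9: "\<not>(v1 \<in> E \<and> v2 \<in> E \<and> v6 \<in> E \<and> v7 \<in> E)" using d card3_four[OF E, of v1 v2 v6 v7] by auto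
  have q10: "\<not>(v1 \<in> E \<and> v3 \<in> E \<and> v4 \<in> E \<and> v5 \<in> E)" using d card3_four[OF E, of v1 v3 v4 v5] by auto
  have q11: "\<not>(v1 \<in> E \<and> v3 \<in> E \<and> v4 \<in> E \<and> v6 \<in> E)" using d card3_four[OF E, of v1 v3 v4 v6] by auto
  have q12: "\<not>(v1 \<in> E \<and> v3 \<in> E \<and> v4 \<in> E \<and> v7 \<in> E)" using d card3_four[OF E, of v1 v3 v4 v7] by auto
  have q13: "\<not>(v1 \<in> E \<and> v3 \<in> E \<and> v5 \<in> E \<and> v6 \<in> E)" using d card3_four[OF E, of v1 v3 v5 v6] by auto
  have q14: "\<not>(v1 \<in> E \<and> v3 \<in> E \<and> v5 \<in> E \<and> v7 \<in> E)" using d card3_four[OF E, of v1 v3 v5 v7] by auto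
  have q15: "\<not>(v1 \<in> E \<and> v3 \<in> E \<and> v6 \<in> E \<and> v7 \<in> E)" using d card3_four[OF E, of v1 v3 v6 v7] by auto
  have q16: "\<not>(v1 \<in> E \<and> v4 \<in> E \<and> v5 \<in> E \<and> v6 \<in> E)" using d card3_four[OF E, of v1 v4 v5 v6] by auto
  have q17: "\<not>(v1 \<in> E \<and> v4 \<in> E \<and> v5 \<in> E \<and> v7 \<in> E)" using d card3_four[OF E, of v1 v4 v5 v7] by auto
  have q18: "\<not>(v1 \<in> E \<and> v4 \<in> E \<and> v6 \<in> E \<and> v7 \<in> E)" using d card3_four[OF E, of v1 v4 v6 v7] by auto
  have q19: "\<not>(v1 \<in> E \<and> v5 \<in> E \<and> v6 \<in> E \<and> v7 \<in> E)" using d card3_four[OF E, of v1 v5 v6 v7] by auto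
  have q20: "\<not>(v2 \<in> E \<and> v3 \<in> E \<and> v4 \<in> E \<and> v5 \<in> E)" using d card3_four[OF E, of v2 v3 v4 v5] by auto
  have q21: "\<not>(v2 \<in> E \<and> v3 \<in> E \<and> v4 \<in> E \<and> v6 \<in> E)" using d card3_four[OF E, of v2 v3 v4 v6] by auto
  have q22: "\<not>(v2 \<in> E \<and> v3 \<in> E \<and> v4 \<in> E \<and> v7 \<in> E)" using d card3_four[OF E, of v2 v3 v4 v7] by auto
  have q23: "\<not>(v2 \<in> E \<and> v3 \<in> E \<and> v5 \<in> E \<and> v6 \<in> E)" using d card3_four[OF E, of v2 v3 v5 v6] by auto
  have q24: "\<not>(v2 \<in> E \<and> v3 \<in> E \<and> v5 \<in> E \<and> v7 \<in> E)" using d card3_four[OF E, of v2 v3 v5 v7] by auto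
  have q25: "\<not>(v2 \<in> E \<and> v3 \<in> E \<and> v6 \<in> E \<and> v7 \<in> E)" using d card3_four[OF E, of v2 v3 v6 v7] by auto
  have q26: "\<not>(v2 \<in> E \<and> v4 \<in> E \<and> v5 \<in> E \<and> v6 \<in> E)" using d card3_four[OF E, of v2 v4 v5 v6] by auto
  have q27: "\<not>(v2 \<in> E \<and> v4 \<in> E \<and> v5 \<in> E \<and> v7 \<in> E)" using d card3_four[OF E, of v2 v4 v5 v7] by auto
  have q28: "\<not>(v2 \<in> E \<and> v4 \<in> E \<and> v6 \<in> E \<and> v7 \<in> E)" using d card3_four[OF E, of v2 v4 v6 v7] by auto
  have q29: "\<not>(v2 \<in> E \<and> v5 \<in> E \<and> v6 \<in> E \<and> v7 \<in> E)" using d card3_four[OF E, of v2 v5 v6 v7] by auto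
  have q30: "\<not>(v3 \<in> E \<and> v4 \<in> E \<and> v5 \<in> E \<and> v6 \<in> E)" using d card3_four[OF E, of v3 v4 v5 v6] by auto
  have q31: "\<not>(v3 \<in> E \<and> v4 \<in> E \<and> v5 \<in> E \<and> v7 \<in> E)" using d card3_four[OF E, of v3 v4 v5 v7] by auto
  have q32: "\<not>(v3 \<in> E \<and> v4 \<in> E \<and> v6 \<in> E \<and> v7 \<in> E)" using d card3_four[OF E, of v3 v4 v6 v7] by auto
  have q33: "\<not>(v3 \<in> E \<and> v5 \<in> E \<and> v6 \<in> E \<and> v7 \<in> E)" using d card3_four[OF E, of v3 v5 v6 v7] by auto
  have q34: "\<not>(v4 \<in> E \<and> v5 \<in> E \<and> v6 \<in> E \<and> v7 \<in> E)" using d card3_four[OF E, of v4 v5 v6 v7] by auto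
  have "(v1 \<in> E \<and> v2 \<in> E \<and> v3 \<in> E) \<or> (v1 \<in> E \<and> v4 \<in> E \<and> v5 \<in> E) \<or> (v1 \<in> E \<and> v6 \<in> E \<and> v7 \<in> E) \<or> (v2 \<in> E \<and> v4 \<in> E \<and> v6 \<in> E) \<or> (v2 \<in> E \<and> v5 \<in> E \<and> v7 \<in> E) \<or> (v3 \<in> E \<and> v5 \<in> E \<and> v6 \<in> E) \<or> (v3 \<in> E \<and> v4 \<in> E \<and> v7 \<in> E)" using m0 m1 m2 m3 m4 m5 m6 q0 q1 q2 q3 q4 q5 q6 q7 q8 q9 q10 q11 q12 q13 q14 q15 q16 q17 q18 q19 q20 q21 q22 q23 q24 q25 q26 q27 q28 q29 q30 q31 q32 q33 q34 by sat
  then show ?thesis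
  proof (elim disjE)
    assume h: "v1 \<in> E \<and> v2 \<in> E \<and> v3 \<in> E"
    have "E = {v1,v2,v3}" using h d card3_eq[OF E, of v1 v2 v3] by auto
    then show ?thesis by simp
  next
    assume h: "v1 \<in> E \<and> v4 \<in> E \<and> v5 \<in> E"
    have "E = {v1,v4,v5}" using h d card3_eq[OF E, of v1 v4 v5] by auto
    then show ?thesis by simp
  next
    assume h: "v1 \<in> E \<and> v6 \<in> E \<and> v7 \<in> E"
    have "E = {v1,v6,v7}" using h d card3_eq[OF E, of v1 v6 v7] by auto
    then show ?thesis by simp
  next
    assume h: "v2 \<in> E \<and> v4 \<in> E \<and> v6 \<in> E"
    have "E = {v2,v4,v6}" using h d card3_eq[OF E, of v2 v4 v6] by auto
    then show ?thesis by simp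
  next
    assume h: "v2 \<in> E \<and> v5 \<in> E \<and> v7 \<in> E"
    have "E = {v2,v5,v7}" using h d card3_eq[OF E, of v2 v5 v7] by auto
    then show ?thesis by simp
  next
    assume h: "v3 \<in> E \<and> v5 \<in> E \<and> v6 \<in> E"
    have "E = {v3,v5,v6}" using h d card3_eq[OF E, of v3 v5 v6] by auto
    then show ?thesis by simp
  next
    assume h: "v3 \<in> E \<and> v4 \<in> E \<and> v7 \<in> E"
    have "E = {v3,v4,v7}" using h d card3_eq[OF E, of v3 v4 v7] by auto
    then show ?thesis by simp
  qed
qed

lemma meet: "intersecting F \<Longrightarrow> A\<in>F \<Longrightarrow> B\<in>F \<Longrightarrow> A \<inter> B \<noteq> {}"
  unfolding intersecting_def by blast

lemma T0_iso:
  assumes d: "distinct [v1,v2,v3,v4,v5,v6::'a]"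
  and I: "intersecting F" and W: "\<forall>E\<in>F. card E = 3"
  and s: "{{v1,v2,v3},{v1,v2,v4},{v3,v4,v5},{v3,v4,v6},{v1,v5,v6},{v2,v5,v6},{v1,v3,v5},{v2,v4,v5},{v1,v4,v6},{v2,v3,v6}} \<subseteq> F"
  shows "fam_iso T0 F"
proof -
  let ?P = "{{v1,v2,v3},{v1,v2,v4},{v3,v4,v5},{v3,v4,v6},{v1,v5,v6},{v2,v5,v6},{v1,v3,v5},{v2,v4,v5},{v1,v4,v6},{v2,v3,v6}}"
  have "F \<subseteq> ?P"
  proof
    fix E assume "E \<in> F"
    have W': "card E = 3" using W `E\<in>F` by blast
    show "E \<in> ?P" by (rule T0_max[OF d W']) (rule meet[OF I `E\<in>F` subsetD[OF s]])
  qed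
  then have eq: "F = ?P" using s by (rule subset_antisym)
  define f where "f = (\<lambda>i::nat. if i=1 then v1 else if i=2 then v2 else if i=3 then v3 else if i=4 then v4 else if i=5 then v5 else v6)"
  have fv: "f 1 = v1" "f 2 = v2" "f 3 = v3" "f 4 = v4" "f 5 = v5" "f 6 = v6" unfolding f_def by simp_all
  have u: "\<Union>T0 = {1,2,3,4,5,6}" unfolding T0_def by auto
  have "inj_on f (\<Union>T0)" unfolding u inj_on_def f_def using d by auto
  moreover have "(\<lambda>X. f ` X) ` T0 = F" unfolding eq T0_def by (simp only: image_insert image_empty fv)
  ultimately show ?thesis unfolding fam_iso_def by blast
qed

lemma Fano_iso:
  assumes d: "distinct [v1,v2,v3,v4,v5,v6,v7::'a]"
  and I: "intersecting F" and W: "\<forall>E\<in>F. card E = 3"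
  and s: "{{v1,v2,v3},{v1,v4,v5},{v1,v6,v7},{v2,v4,v6},{v2,v5,v7},{v3,v5,v6},{v3,v4,v7}} \<subseteq> F"
  shows "fam_iso Fano F"
proof -
  let ?P = "{{v1,v2,v3},{v1,v4,v5},{v1,v6,v7},{v2,v4,v6},{v2,v5,v7},{v3,v5,v6},{v3,v4,v7}}"
  have "F \<subseteq> ?P"
  proof
    fix E assume "E \<in> F"
    have W': "card E = 3" using W `E\<in>F` by blast
    show "E \<in> ?P" by (rule Fano_max[OF d W']) (rule meet[OF I `E\<in>F` subsetD[OF s]])
  qed
  then have eq: "F = ?P" using s by (rule subset_antisym)
  define f where "f = (\<lambda>i::nat. if i=1 then v1 else if i=2 then v2 else if i=3 then v3 else if i=4 then v4 else if i=5 then v5 else if i=6 then v6 else v7)"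
  have fv: "f 1 = v1" "f 2 = v2" "f 3 = v3" "f 4 = v4" "f 5 = v5" "f 6 = v6" "f 7 = v7" unfolding f_def by simp_all
  have u: "\<Union>Fano = {1,2,3,4,5,6,7}" unfolding Fano_def by auto
  have "inj_on f (\<Union>Fano)" unfolding u inj_on_def f_def using d by auto
  moreover have "(\<lambda>X. f ` X) ` Fano = F" unfolding eq Fano_def by (simp only: image_insert image_empty fv)
  ultimately show ?thesis unfolding fam_iso_def by blast
qed

lemma caseI:
  assumes I: "intersecting F" and W: "\<forall>E\<in>F. card E = 3" and C: "condC F"
  and d: "distinct [a,b,c,d]" and T: "{a,b,c}\<in>F" and T': "{a,b,d}\<in>F"
  shows "fam_iso T0 F"
proof -
  obtain E1 E2 where E: "E1\<in>F" "E2\<in>F" "E1\<noteq>E2" "a\<notin>E1" "b\<notin>E1" "a\<notin>E2" "b\<notin>E2"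
    using ta12[OF C T'] d by auto
  have cd1: "c\<in>E1" "d\<in>E1" using meet[OF I E(1) T] meet[OF I E(1) T'] E by auto
  have cd2: "c\<in>E2" "d\<in>E2" using meet[OF I E(2) T] meet[OF I E(2) T'] E by auto
  obtain x where x: "x\<in>E1" "x\<noteq>c" "x\<noteq>d" using third[OF _ cd1] W E d by auto
  obtain y where y: "y\<in>E2" "y\<noteq>c" "y\<noteq>d" using third[OF _ cd2] W E d by auto
  have E1: "E1 = {c,d,x}" using card3_eq[of E1 c d x] W E cd1 x d by auto
  have E2: "E2 = {c,d,y}" using card3_eq[of E2 c d y] W E cd2 y d by auto
  have xy: "x\<noteq>y" "x\<noteq>a" "x\<noteq>b" "y\<noteq>a" "y\<noteq>b" using E E1 E2 by auto
  have cdx: "{c,d,x}\<in>F" and cdy: "{c,d,y}\<in>F" using E E1 E2 by auto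
  obtain F1 F2 where Fs: "F1\<in>F" "F2\<in>F" "F1\<noteq>F2" "c\<notin>F1" "d\<notin>F1" "c\<notin>F2" "d\<notin>F2"
    using ta12[OF C cdx] d by auto
  have "F1 = {a,x,y} \<or> F1 = {b,x,y}" if "F1\<in>F" "c\<notin>F1" "d\<notin>F1" for F1
  proof -
    have "x\<in>F1" "y\<in>F1" "a\<in>F1 \<or> b\<in>F1"
      using meet[OF I that(1) cdx] meet[OF I that(1) cdy] meet[OF I that(1) T] that by auto
    moreover have "card F1 = 3" using W that by blast
    ultimately show ?thesis using card3_eq[of F1 a x y] card3_eq[of F1 b x y] xy d by auto
  qed
  then have "F1 = {a,x,y} \<or> F1 = {b,x,y}" "F2 = {a,x,y} \<or> F2 = {b,x,y}" using Fs by blast+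
  then have axy: "{a,x,y}\<in>F" and bxy: "{b,x,y}\<in>F" using Fs(1-3) by (elim disjE; simp)+
  have two: "A\<in>F \<or> B\<in>F" if "G1\<in>F" "G2\<in>F" "G1\<noteq>G2" "G1\<in>{A,B,D}" "G2\<in>{A,B,D}" for A B D G1 G2
    using that by auto
  have dd: "distinct [a,b,c,d,x,y]" using d xy x y by auto
  have i: "{a,d,x}\<in>F \<or> {a,d,y}\<in>F"
  proof -
    obtain G1 G2 where G: "G1\<in>F" "G2\<in>F" "G1\<noteq>G2" "b\<notin>G1" "c\<notin>G1" "b\<notin>G2" "c\<notin>G2"
      using ta23[OF C T] d by auto
    have "G \<in> {{a,d,x},{a,d,y},{a,x,y}}" if "G\<in>F" "b\<notin>G" "c\<notin>G" for G
      using pick3[of G a d x y] W that meet[OF I that(1) T] meet[OF I that(1) cdx]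
        meet[OF I that(1) cdy] meet[OF I that(1) bxy] dd by auto
    then show ?thesis using two G by meson
  qed
  have ii: "{b,d,x}\<in>F \<or> {b,d,y}\<in>F"
  proof -
    obtain G1 G2 where G: "G1\<in>F" "G2\<in>F" "G1\<noteq>G2" "a\<notin>G1" "c\<notin>G1" "a\<notin>G2" "c\<notin>G2"
      using ta13[OF C T] d by auto
    have "G \<in> {{b,d,x},{b,d,y},{b,x,y}}" if "G\<in>F" "a\<notin>G" "c\<notin>G" for G
      using pick3[of G b d x y] W that meet[OF I that(1) T] meet[OF I that(1) cdx]
        meet[OF I that(1) cdy] meet[OF I that(1) axy] dd by auto
    then show ?thesis using two G by meson
  qed
  have iii: "{a,c,x}\<in>F \<or> {a,c,y}\<in>F"
  proof -
    obtain G1 G2 where G: "G1\<in>F" "G2\<in>F" "G1\<noteq>G2" "b\<notin>G1" "d\<notin>G1" "b\<notin>G2" "d\<notin>G2"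
      using ta23[OF C T'] d by auto
    have "G \<in> {{a,c,x},{a,c,y},{a,x,y}}" if "G\<in>F" "b\<notin>G" "d\<notin>G" for G
      using pick3[of G a c x y] W that meet[OF I that(1) T'] meet[OF I that(1) cdx]
        meet[OF I that(1) cdy] meet[OF I that(1) bxy] dd by auto
    then show ?thesis using two G by meson
  qed
  have iv: "{b,c,x}\<in>F \<or> {b,c,y}\<in>F"
  proof -
    obtain G1 G2 where G: "G1\<in>F" "G2\<in>F" "G1\<noteq>G2" "a\<notin>G1" "d\<notin>G1" "a\<notin>G2" "d\<notin>G2"
      using ta13[OF C T'] d by auto
    have "G \<in> {{b,c,x},{b,c,y},{b,x,y}}" if "G\<in>F" "a\<notin>G" "d\<notin>G" for G
      using pick3[of G b c x y] W that meet[OF I that(1) T'] meet[OF I that(1) cdx]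
        meet[OF I that(1) cdy] meet[OF I that(1) axy] dd by auto
    then show ?thesis using two G by meson
  qed
  have ex1: "\<not> ({a,c,x}\<in>F \<and> {b,d,y}\<in>F)" using meet[OF I, of "{a,c,x}" "{b,d,y}"] dd by auto
  have ex2: "\<not> ({a,c,y}\<in>F \<and> {b,d,x}\<in>F)" using meet[OF I, of "{a,c,y}" "{b,d,x}"] dd by auto
  have ex3: "\<not> ({a,d,x}\<in>F \<and> {b,c,y}\<in>F)" using meet[OF I, of "{a,d,x}" "{b,c,y}"] dd by auto
  have ex4: "\<not> ({a,d,y}\<in>F \<and> {b,c,x}\<in>F)" using meet[OF I, of "{a,d,y}" "{b,c,x}"] dd by auto
  have ex5: "\<not> ({a,c,x}\<in>F \<and> {a,d,x}\<in>F)"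
  proof
    assume h: "{a,c,x}\<in>F \<and> {a,d,x}\<in>F"
    obtain G1 G2 where G: "G1\<in>F" "G2\<in>F" "G1\<noteq>G2" "a\<notin>G1" "x\<notin>G1" "a\<notin>G2" "x\<notin>G2"
      using ta12[OF C axy] dd by auto
    have "G = {c,d,y}" if "G\<in>F" "a\<notin>G" "x\<notin>G" for G
      using card3_eq[of G c d y] W that meet[OF I that(1), of "{a,c,x}"] meet[OF I that(1), of "{a,d,x}"]
        meet[OF I that(1) axy] h dd by auto
    then show False using G by metis
  qed
  have ex6: "\<not> ({a,c,y}\<in>F \<and> {a,d,y}\<in>F)"
  proof
    assume h: "{a,c,y}\<in>F \<and> {a,d,y}\<in>F"
    obtain G1 G2 where G: "G1\<in>F" "G2\<in>F" "G1\<noteq>G2" "a\<notin>G1" "y\<notin>G1" "a\<notin>G2" "y\<notin>G2"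
      using ta13[OF C axy] dd by auto
    have "G = {c,d,x}" if "G\<in>F" "a\<notin>G" "y\<notin>G" for G
      using card3_eq[of G c d x] W that meet[OF I that(1), of "{a,c,y}"] meet[OF I that(1), of "{a,d,y}"]
        meet[OF I that(1) axy] h dd by auto
    then show False using G by metis
  qed
  have "({a,d,x}\<in>F \<and> {b,c,x}\<in>F \<and> {a,c,y}\<in>F \<and> {b,d,y}\<in>F) \<or>
        ({a,d,y}\<in>F \<and> {b,c,y}\<in>F \<and> {a,c,x}\<in>F \<and> {b,d,x}\<in>F)"
    using i ii iii iv ex1 ex2 ex3 ex4 ex5 ex6 by blast
  then show ?thesis
  proof
    assume h: "{a,d,x}\<in>F \<and> {b,c,x}\<in>F \<and> {a,c,y}\<in>F \<and> {b,d,y}\<in>F"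
    have dd': "distinct [a,b,c,d,y,x]" using dd by auto
    show ?thesis
    proof (rule T0_iso[OF dd' I W])
      have e: "{a,y,x} = {a,x,y}" "{b,y,x} = {b,x,y}" by auto
      show "{{a, b, c}, {a, b, d}, {c, d, y}, {c, d, x}, {a, y, x}, {b, y, x}, {a, c, y}, {b, d, y}, {a, d, x}, {b, c, x}} \<subseteq> F"
        unfolding e using h T T' cdx cdy axy bxy by (simp only: insert_subset empty_subsetI simp_thms)
    qed
  next
    assume h: "{a,d,y}\<in>F \<and> {b,c,y}\<in>F \<and> {a,c,x}\<in>F \<and> {b,d,x}\<in>F"
    show ?thesis
      by (rule T0_iso[OF dd I W]) (use h T T' cdx cdy axy bxy in \<open>simp only: insert_subset empty_subsetI simp_thms\<close>)
  qed
qed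

lemma caseII_core:
  assumes I: "intersecting F" and W: "\<forall>E\<in>F. card E = 3" and C: "condC F"
  and d: "distinct [a,b,c,p1,q1,p2,q2]" and T: "{a,b,c}\<in>F"
  and A1: "{a,p1,q1}\<in>F" and A2: "{a,p2,q2}\<in>F" and B1: "{b,p1,p2}\<in>F" and B2: "{b,q1,q2}\<in>F"
  shows "fam_iso Fano F"
proof -
  have ab: "a\<noteq>b" using d by simp
  obtain G1 G2 where G: "G1\<in>F" "G2\<in>F" "G1\<noteq>G2" "a\<notin>G1" "b\<notin>G1" "a\<notin>G2" "b\<notin>G2"
    using ta12[OF C T ab] by blast
  have h: "G = {c,p1,q2} \<or> G = {c,q1,p2}" if "G\<in>F" "a\<notin>G" "b\<notin>G" for G
  proof -
    have "card G = 3" using W that by blast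
    then show ?thesis
      using pickF[of G c p1 q1 p2 q2] that meet[OF I that(1) T] meet[OF I that(1) A1]
        meet[OF I that(1) A2] meet[OF I that(1) B1] meet[OF I that(1) B2] d by auto
  qed
  have "G1 = {c,p1,q2} \<or> G1 = {c,q1,p2}" "G2 = {c,p1,q2} \<or> G2 = {c,q1,p2}" using G h by blast+
  then have C1: "{c,p1,q2}\<in>F" and C2: "{c,q1,p2}\<in>F" using G(1-3) by (elim disjE; simp)+
  show ?thesis
    by (rule Fano_iso[OF d I W]) (use T A1 A2 B1 B2 C1 C2 in \<open>simp only: insert_subset empty_subsetI simp_thms\<close>)
qed

lemma caseII:
  assumes I: "intersecting F" and W: "\<forall>E\<in>F. card E = 3" and C: "condC F"
  and lin: "\<And>E G u v. E\<in>F \<Longrightarrow> G\<in>F \<Longrightarrow> E\<noteq>G \<Longrightarrow> u\<noteq>v \<Longrightarrow> u\<in>E \<Longrightarrow> v\<in>E \<Longrightarrow> u\<in>G \<Longrightarrow> v\<in>G \<Longrightarrow> False"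
  and TF: "T\<in>F"
  shows "fam_iso Fano F"
proof -
  obtain a b c where abc: "T = {a,b,c}" "a\<noteq>b" "a\<noteq>c" "b\<noteq>c"
    using W TF by (auto simp: card_3_iff)
  have Tf: "{a,b,c}\<in>F" using TF abc by simp
  obtain A1 A2 where A: "A1\<in>F" "A2\<in>F" "A1\<noteq>A2" "b\<notin>A1" "c\<notin>A1" "b\<notin>A2" "c\<notin>A2"
    using ta23[OF C Tf abc(4)] by blast
  have aA: "a\<in>A1" "a\<in>A2" using meet[OF I A(1) Tf] meet[OF I A(2) Tf] A by auto
  obtain p1 q1 where A1: "A1 = {a,p1,q1}" "a\<noteq>p1" "a\<noteq>q1" "p1\<noteq>q1"
    using split3[of A1 a] W A aA by blast
  obtain p2 q2 where A2: "A2 = {a,p2,q2}" "a\<noteq>p2" "a\<noteq>q2" "p2\<noteq>q2"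
    using split3[of A2 a] W A aA by blast
  have n1: "p1\<notin>A2" using lin[OF A(1) A(2) A(3) A1(2), of] aA A1 by blast
  have n2: "q1\<notin>A2" using lin[OF A(1) A(2) A(3) A1(3)] aA A1 by blast
  have d: "distinct [a,b,c,p1,q1,p2,q2]" using abc A A1 A2 n1 n2 by auto
  have A1f: "{a,p1,q1}\<in>F" and A2f: "{a,p2,q2}\<in>F" using A A1 A2 by auto
  have ac: "a\<noteq>c" using abc by simp
  obtain B1 B2 where B: "B1\<in>F" "B2\<in>F" "B1\<noteq>B2" "a\<notin>B1" "c\<notin>B1" "a\<notin>B2" "c\<notin>B2"
    using ta13[OF C Tf ac] by blast
  have hB: "G = {b,p1,p2} \<or> G = {b,p1,q2} \<or> G = {b,q1,p2} \<or> G = {b,q1,q2}"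
    if "G\<in>F" "a\<notin>G" "c\<notin>G" for G
  proof -
    have "card G = 3" using W that by blast
    then show ?thesis
      using pick22[of G b p1 q1 p2 q2] that meet[OF I that(1) Tf] meet[OF I that(1) A1f]
        meet[OF I that(1) A2f] d by auto
  qed
  have bB: "b\<in>B1" "b\<in>B2" using meet[OF I B(1) Tf] meet[OF I B(2) Tf] B by auto
  have s1: "\<not>(p1\<in>B1 \<and> p1\<in>B2)" using lin[OF B(1) B(2) B(3), of b p1] bB d by auto
  have s2: "\<not>(q1\<in>B1 \<and> q1\<in>B2)" using lin[OF B(1) B(2) B(3), of b q1] bB d by auto
  have s3: "\<not>(p2\<in>B1 \<and> p2\<in>B2)" using lin[OF B(1) B(2) B(3), of b p2] bB d by auto
  have s4: "\<not>(q2\<in>B1 \<and> q2\<in>B2)" using lin[OF B(1) B(2) B(3), of b q2] bB d by auto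
  have h1: "B1 = {b,p1,p2} \<or> B1 = {b,p1,q2} \<or> B1 = {b,q1,p2} \<or> B1 = {b,q1,q2}" using hB[OF B(1) B(4) B(5)] .
  have h2: "B2 = {b,p1,p2} \<or> B2 = {b,p1,q2} \<or> B2 = {b,q1,p2} \<or> B2 = {b,q1,q2}" using hB[OF B(2) B(6) B(7)] .
  have "({b,p1,p2}\<in>F \<and> {b,q1,q2}\<in>F) \<or> ({b,p1,q2}\<in>F \<and> {b,q1,p2}\<in>F)"
    using h1
  proof (elim disjE)
    assume e1: "B1 = {b,p1,p2}"
    then have "p1\<notin>B2" "p2\<notin>B2" using s1 s3 by auto
    then have "B2 = {b,q1,q2}" using h2 by auto
    then show ?thesis using e1 B(1,2) by simp
  next
    assume e1: "B1 = {b,p1,q2}"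
    then have "p1\<notin>B2" "q2\<notin>B2" using s1 s4 by auto
    then have "B2 = {b,q1,p2}" using h2 by auto
    then show ?thesis using e1 B(1,2) by simp
  next
    assume e1: "B1 = {b,q1,p2}"
    then have "q1\<notin>B2" "p2\<notin>B2" using s2 s3 by auto
    then have "B2 = {b,p1,q2}" using h2 by auto
    then show ?thesis using e1 B(1,2) by simp
  next
    assume e1: "B1 = {b,q1,q2}"
    then have "q1\<notin>B2" "q2\<notin>B2" using s2 s4 by auto
    then have "B2 = {b,p1,p2}" using h2 by auto
    then show ?thesis using e1 B(1,2) by simp
  qed
  then show ?thesis
  proof
    assume "{b,p1,p2}\<in>F \<and> {b,q1,q2}\<in>F"
    then show ?thesis using caseII_core[OF I W C d Tf A1f A2f] by blast
  next
    assume h: "{b,p1,q2}\<in>F \<and> {b,q1,p2}\<in>F"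
    have d': "distinct [a,b,c,p1,q1,q2,p2]" using d by auto
    have e: "{a,q2,p2} = {a,p2,q2}" by auto
    have A2': "{a,q2,p2}\<in>F" using A2f unfolding e .
    show ?thesis using caseII_core[OF I W C d' Tf A1f A2'] h by blast
  qed
qed

theorem lemma3p1:
  fixes n :: nat and \<T> :: "nat set set"
  assumes "\<T> \<noteq> {}"
    and "\<T> \<subseteq> {T. T \<subseteq> {1..n} \<and> card T = 3}"
    and "intersecting \<T>"
  shows "fam_iso Fano \<T> \<or> fam_iso T0 \<T> \<or>
         (\<exists>T\<in>\<T>. \<exists>S. S \<subseteq> T \<and> card S = 2 \<and> card (avoid \<T> S) \<le> 1)"
proof (rule ccontr)
  assume neg: "\<not> ?thesis"
  have I: "intersecting \<T>" by (rule assms(3))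
  have W: "\<forall>E\<in>\<T>. card E = 3" using assms(2) by auto
  have C: "condC \<T>" unfolding condC_def
  proof (intro ballI allI impI)
    fix T S assume "T \<in> \<T>" "S \<subseteq> T \<and> card S = 2"
    then have "\<not> card (avoid \<T> S) \<le> 1" using neg by blast
    then show "2 \<le> card (avoid \<T> S)" by simp
  qed
  have nF: "\<not> fam_iso Fano \<T>" and nT: "\<not> fam_iso T0 \<T>" using neg by auto
  show False
  proof (cases "\<exists>E\<in>\<T>. \<exists>G\<in>\<T>. E\<noteq>G \<and> (\<exists>u v. u\<noteq>v \<and> u\<in>E \<and> v\<in>E \<and> u\<in>G \<and> v\<in>G)")
    case True
    then obtain E G u v where h: "E\<in>\<T>" "G\<in>\<T>" "E\<noteq>G" "u\<noteq>v" "u\<in>E" "v\<in>E" "u\<in>G" "v\<in>G" by blast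
    have cE: "card E = 3" and cG: "card G = 3" using W h by auto
    obtain w where w: "w\<in>E" "w\<noteq>u" "w\<noteq>v" using third[OF cE h(5,6,4)] by blast
    obtain z where z: "z\<in>G" "z\<noteq>u" "z\<noteq>v" using third[OF cG h(7,8,4)] by blast
    have E: "E = {u,v,w}" using card3_eq[OF cE h(5,6) w(1) h(4)] w by auto
    have G: "G = {u,v,z}" using card3_eq[OF cG h(7,8) z(1) h(4)] z by auto
    have "w \<noteq> z" using E G h(3) by auto
    then have "distinct [u,v,w,z]" using h(4) w z by auto
    then have "fam_iso T0 \<T>" using caseI[OF I W C] h(1,2) E G by blast
    then show False using nT by blast
  next
    case False
    then have lin: "\<And>E G u v. E\<in>\<T> \<Longrightarrow> G\<in>\<T> \<Longrightarrow> E\<noteq>G \<Longrightarrow> u\<noteq>v \<Longrightarrow> u\<in>E \<Longrightarrow> v\<in>E \<Longrightarrow> u\<in>G \<Longrightarrow> v\<in>G \<Longrightarrow> False"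
      by blast
    obtain T where "T\<in>\<T>" using assms(1) by blast
    have "fam_iso Fano \<T>" by (rule caseII[OF I W C _ \<open>T\<in>\<T>\<close>], rule lin, assumption+)
    then show False using nF by blast
  qed
qed

end
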